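(* Let $\mathbb{X}$ be a two-dimensional real Banach space, let $x\in S_{\mathbb{X}}$ be a smooth point, and let $\epsilon\in[0,1)$. Then there exists a normal cone $K$ in $\mathbb{X}$ such that $G(x,\epsilon)=K\cup(-K)$.
   Context: $S_{\mathbb{X}}$ is the unit sphere. A point $x\in S_{\mathbb{X}}$ is smooth if there is a unique norm-one linear functional $f$ with $f(x)=1$. For $x,y\in\mathbb{X}$ and $\epsilon\in[0,1)$, $x\perp_B^{\epsilon} y$ means $\|x+\lambda y\|^2\geq\|x\|^2-2\epsilon\|x\|\,\|\lambda y\|$ for all $\lambda\in\mathbb{R}$; $G(x,\epsilon)=\{y\in\mathbb{X}: x\perp_B^{\epsilon}y\}$. A subset $K\subseteq\mathbb{X}$ is a normal cone if $K+K\subseteq K$, $\alpha K\subseteq K$ for all $\alpha\geq0$, and $K\cap(-K)=\{0\}$. *)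

theory Defs
  imports "HOL-Analysis.Analysis"
begin

definition smooth_point :: "'a::real_normed_vector \<Rightarrow> bool" where
  "smooth_point x \<longleftrightarrow> norm x = 1 \<and>
     (\<exists>!f :: 'a \<Rightarrow> real. bounded_linear f \<and> onorm f = 1 \<and> f x = 1)"

definition approx_bj_orth :: "real \<Rightarrow> 'a::real_normed_vector \<Rightarrow> 'a \<Rightarrow> bool" where
  "approx_bj_orth \<epsilon> x y \<longleftrightarrow>
     (\<forall>t::real. (norm (x + t *\<^sub>R y))\<^sup>2 \<ge> (norm x)\<^sup>2 - 2 * \<epsilon> * norm x * norm (t *\<^sub>R y))"

definition G_set :: "'a::real_normed_vector \<Rightarrow> real \<Rightarrow> 'a set" where
  "G_set x \<epsilon> = {y. approx_bj_orth \<epsilon> x y}"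

definition normal_cone :: "'a::real_vector set \<Rightarrow> bool" where
  "normal_cone K \<longleftrightarrow> (\<forall>a\<in>K. \<forall>b\<in>K. a + b \<in> K) \<and>
     (\<forall>\<alpha>::real. \<alpha> \<ge> 0 \<longrightarrow> (\<forall>a\<in>K. \<alpha> *\<^sub>R a \<in> K)) \<and>
     K \<inter> uminus ` K = {0}"

end

theory Submission imports Defs begin

lemma basis2:
  fixes x :: "'a::real_normed_vector" and f :: "'a \<Rightarrow> real"
  assumes dim: "dim (UNIV :: 'a set) = 2" and x0: "x \<noteq> 0"
    and lf: "linear f" and fx: "f x = 1"
  obtains w where "w \<noteq> 0" "f w = 0" "\<And>v. \<exists>b. v = f v *\<^sub>R x + b *\<^sub>R w"
proof -
  have "\<not> (UNIV \<subseteq> span {x})"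
  proof
    assume "UNIV \<subseteq> span {x}"
    from dim_le_card[OF this] dim show False by simp
  qed
  then obtain z where z: "z \<notin> span {x}" by blast
  define w where "w = z - f z *\<^sub>R x"
  have fw: "f w = 0" using lf fx by (simp add: w_def linear_diff linear_scale)
  have wns: "w \<notin> span {x}"
  proof
    assume "w \<in> span {x}"
    then have "w + f z *\<^sub>R x \<in> span {x}" by (simp add: span_add span_base span_scale)
    then show False using z by (simp add: w_def)
  qed
  then have w0: "w \<noteq> 0" using span_zero by auto
  have ind: "independent {w, x}"
    using wns x0 by (simp add: independent_insert)
  have "w \<noteq> x" using wns span_base[of x "{x}"] by auto
  obtain B :: "'a set" where B: "independent B" "UNIV \<subseteq> span B" "card B = dim (UNIV::'a set)"
    using real_vector.basis_exists[of "UNIV::'a set"] by blast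
  have finB: "finite B" proof (rule ccontr) assume "infinite B" then have "card B = 0" by simp then show False using B dim by simp qed
  have "UNIV \<subseteq> span {w, x}"
  proof
    fix v :: 'a
    show "v \<in> span {w, x}"
    proof (rule ccontr)
      assume nv: "v \<notin> span {w, x}"
      then have "v \<noteq> w" "v \<noteq> x" using span_base[of w "{w,x}"] span_base[of x "{w,x}"] by auto
      have "independent {v, w, x}" using nv ind by (rule_tac independent_insertI) auto
      then have "card {v, w, x} \<le> card B"
        using real_vector.independent_span_bound[OF finB, of "{v,w,x}"] B by auto
      then show False using \<open>v \<noteq> w\<close> \<open>v \<noteq> x\<close> \<open>w \<noteq> x\<close> B dim by simp
    qed
  qed
  have rep: "\<exists>b. v = f v *\<^sub>R x + b *\<^sub>R w" for v
  proof -
    have "v \<in> span {x, w}" using \<open>UNIV \<subseteq> span {w, x}\<close> by (auto simp: insert_commute)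
    then obtain k where "v - k *\<^sub>R x \<in> span {w}" by (auto simp: span_breakdown_eq)
    then obtain b where b: "v - k *\<^sub>R x = b *\<^sub>R w" by (auto simp: span_singleton)
    then have "f (v - k *\<^sub>R x) = f (b *\<^sub>R w)" by simp
    then have "f v = k" using lf fx fw by (simp add: linear_diff linear_scale)
    then show ?thesis using b by (metis add_diff_cancel_left' diff_add_cancel)
  qed
  show ?thesis using that w0 fw rep by blast
qed

lemma inf_zero:
  fixes x w :: "'a::real_normed_vector" and f :: "'a \<Rightarrow> real"
  assumes bl: "bounded_linear f" and fx: "f x = 1" and nx: "norm x = 1"
    and fle: "\<And>v. f v \<le> norm v"
    and uniq: "\<And>g. bounded_linear g \<Longrightarrow> onorm g = 1 \<Longrightarrow> g x = 1 \<Longrightarrow> g = f"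
    and w0: "w \<noteq> 0" and fw: "f w = 0" and rep: "\<And>v. \<exists>b. v = f v *\<^sub>R x + b *\<^sub>R w"
    and d: "\<delta> > 0"
  shows "\<exists>\<alpha>. norm (\<alpha> *\<^sub>R x + w) \<le> \<alpha> + \<delta>"
proof (rule ccontr)
  assume "\<not> ?thesis"
  then have H: "\<And>\<alpha>. norm (\<alpha> *\<^sub>R x + w) > \<alpha> + \<delta>" by (meson not_le)
  interpret f: bounded_linear f by (rule bl)
  define c where "c v = (THE b. v = f v *\<^sub>R x + b *\<^sub>R w)" for v
  have cu: "c v = b" if "v = f v *\<^sub>R x + b *\<^sub>R w" for v b
    unfolding c_def
  proof (rule the_equality)
    show "v = f v *\<^sub>R x + b *\<^sub>R w" by (rule that)
    fix b' assume "v = f v *\<^sub>R x + b' *\<^sub>R w"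
    with that have "b' *\<^sub>R w = b *\<^sub>R w" by (metis add_left_cancel)
    then show "b' = b" using w0 by simp
  qed
  have cv: "v = f v *\<^sub>R x + c v *\<^sub>R w" for v
    using rep[of v] cu by metis
  have cadd: "c (u + v) = c u + c v" for u v
  proof (rule cu)
    have "u + v = (f u *\<^sub>R x + c u *\<^sub>R w) + (f v *\<^sub>R x + c v *\<^sub>R w)" using cv[of u] cv[of v] by simp
    also have "\<dots> = f (u + v) *\<^sub>R x + (c u + c v) *\<^sub>R w" by (simp add: f.add algebra_simps)
    finally show "u + v = f (u + v) *\<^sub>R x + (c u + c v) *\<^sub>R w" .
  qed
  have cscale: "c (r *\<^sub>R v) = r * c v" for r v
  proof (rule cu)
    have "r *\<^sub>R v = r *\<^sub>R (f v *\<^sub>R x + c v *\<^sub>R w)" using cv[of v] by simp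
    also have "\<dots> = f (r *\<^sub>R v) *\<^sub>R x + (r * c v) *\<^sub>R w" by (simp add: f.scaleR algebra_simps)
    finally show "r *\<^sub>R v = f (r *\<^sub>R v) *\<^sub>R x + (r * c v) *\<^sub>R w" .
  qed
  define g where "g v = f v + \<delta> * c v" for v
  have gadd: "g (u + v) = g u + g v" for u v by (simp add: g_def f.add cadd algebra_simps)
  have gscale: "g (r *\<^sub>R v) = r *\<^sub>R g v" for r v by (simp add: g_def f.scaleR cscale algebra_simps)
  have gle: "g v \<le> norm v" for v
  proof (cases "c v > 0")
    case True
    define b where "b = c v"
    define a where "a = f v"
    have "v = b *\<^sub>R ((a / b) *\<^sub>R x + w)" using cv[of v] True
      by (simp add: a_def b_def algebra_simps)
    then have "norm v = b * norm ((a / b) *\<^sub>R x + w)" using True b_def by (metis abs_of_pos norm_scaleR)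
    also have "\<dots> > b * (a / b + \<delta>)" using H[of "a/b"] True b_def by simp
    moreover have "b * (a / b + \<delta>) = a + \<delta> * b" using True b_def by (simp add: field_simps)
    ultimately have "norm v > a + \<delta> * b" by linarith
    then show ?thesis by (simp add: g_def a_def b_def)
  next
    case False
    then have "g v \<le> f v" using d by (simp add: g_def mult_nonneg_nonpos)
    then show ?thesis using fle[of v] by simp
  qed
  have gabs: "norm (g v) \<le> norm v * 1" for v
  proof -
    have "g (-v) = - g v" using gscale[of "-1" v] by simp
    then show ?thesis using gle[of v] gle[of "-v"] by simp
  qed
  have blg: "bounded_linear g" by (rule bounded_linear_intro[OF gadd gscale gabs])
  have cx: "c x = 0" by (rule cu) (simp add: fx)
  have gx: "g x = 1" by (simp add: g_def fx cx)
  have "onorm g \<le> 1" by (rule onorm_bound) (use gabs in simp_all)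
  moreover have "1 \<le> onorm g" using onorm[OF blg, of x] gx nx by simp
  ultimately have "onorm g = 1" by simp
  then have "g = f" using uniq blg gx by blast
  moreover have "c w = 1" by (rule cu) (simp add: fw)
  ultimately have "f w = \<delta>" by (metis g_def fw add_0 mult_1_right)
  then show False using fw d by simp
qed

lemma core:
  fixes x u :: "'a::real_normed_vector"
  assumes nx: "norm x = 1" and e0: "0 \<le> \<epsilon>"
    and P: "\<And>\<delta>. \<delta> > 0 \<Longrightarrow> \<exists>\<alpha>. norm (\<alpha> *\<^sub>R x - u) \<le> \<alpha> + \<delta>"
    and hs: "s > \<epsilon> * norm (s *\<^sub>R x + u)"
  shows "\<exists>t. (norm (x + t *\<^sub>R (s *\<^sub>R x + u)))\<^sup>2 <
           (norm x)\<^sup>2 - 2 * \<epsilon> * norm x * norm (t *\<^sub>R (s *\<^sub>R x + u))"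
proof -
  define N where "N = norm (s *\<^sub>R x + u)"
  define e where "e = s - \<epsilon> * N"
  have e: "e > 0" using hs by (simp add: e_def N_def)
  have N0: "N \<ge> 0" by (simp add: N_def)
  have s0: "s > 0" using hs e0 N0 N_def by (metis mult_nonneg_nonneg le_less_trans)
  define \<delta> where "\<delta> = e / 2"
  have d0: "\<delta> > 0" using e by (simp add: \<delta>_def)
  obtain \<alpha>0 where a0: "norm (\<alpha>0 *\<^sub>R x - u) \<le> \<alpha>0 + \<delta>" using P[OF d0] by blast
  define \<alpha> where "\<alpha> = max \<alpha>0 0 + (s - \<delta>)\<^sup>2 / e + 1"
  have sq0: "(s - \<delta>)\<^sup>2 / e \<ge> 0" using e by simp
  have al0: "\<alpha> \<ge> 0" "\<alpha> \<ge> \<alpha>0" using sq0 by (auto simp: \<alpha>_def)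
  have big: "\<alpha> + s > (s - \<delta>)\<^sup>2 / e" using s0 by (simp add: \<alpha>_def)
  have as0: "\<alpha> + s > 0" using al0 s0 by simp
  define \<mu> where "\<mu> = 1 / (\<alpha> + s)"
  have mu0: "\<mu> > 0" using as0 by (simp add: \<mu>_def)
  have mu1: "\<mu> * (\<alpha> + s) = 1" using as0 by (simp add: \<mu>_def)
  have na: "norm (\<alpha> *\<^sub>R x - u) \<le> \<alpha> + \<delta>"
  proof -
    have "\<alpha> *\<^sub>R x - u = (\<alpha>0 *\<^sub>R x - u) + (\<alpha> - \<alpha>0) *\<^sub>R x" by (simp add: algebra_simps)
    then have "norm (\<alpha> *\<^sub>R x - u) \<le> norm (\<alpha>0 *\<^sub>R x - u) + norm ((\<alpha> - \<alpha>0) *\<^sub>R x)"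
      by (metis norm_triangle_ineq)
    also have "norm ((\<alpha> - \<alpha>0) *\<^sub>R x) = \<alpha> - \<alpha>0" using al0 nx by simp
    finally show ?thesis using a0 by simp
  qed
  have eq: "x + (-\<mu>) *\<^sub>R (s *\<^sub>R x + u) = \<mu> *\<^sub>R (\<alpha> *\<^sub>R x - u)"
  proof -
    have "x = (\<mu> * (\<alpha> + s)) *\<^sub>R x" using mu1 by simp
    also have "\<dots> = (\<mu> * \<alpha>) *\<^sub>R x + (\<mu> * s) *\<^sub>R x" by (simp add: algebra_simps scaleR_add_left)
    finally have "x = (\<mu> * \<alpha>) *\<^sub>R x + (\<mu> * s) *\<^sub>R x" .
    then show ?thesis by (simp add: algebra_simps)
  qed
  define r where "r = 1 - \<mu> * (s - \<delta>)"
  have r_eq: "r = \<mu> * (\<alpha> + \<delta>)" using mu1 by (simp add: r_def algebra_simps)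
  have r0: "r \<ge> 0" using r_eq mu0 al0 d0 by simp
  have nle: "norm (x + (-\<mu>) *\<^sub>R (s *\<^sub>R x + u)) \<le> r"
    using eq na mu0 r_eq by (simp add: mult_left_mono)
  have sq: "(norm (x + (-\<mu>) *\<^sub>R (s *\<^sub>R x + u)))\<^sup>2 \<le> r\<^sup>2"
    using nle by (simp add: power_mono)
  have key: "\<mu> * (s - \<delta>)\<^sup>2 < e"
  proof -
    have "(s - \<delta>)\<^sup>2 < e * (\<alpha> + s)" using big e by (simp add: field_simps)
    then have "\<mu> * (s - \<delta>)\<^sup>2 < \<mu> * (e * (\<alpha> + s))" using mu0 by simp
    also have "\<dots> = e * (\<mu> * (\<alpha> + s))" by (simp add: algebra_simps)
    also have "\<dots> = e" using mu1 by simp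
    finally show ?thesis .
  qed
  have "r\<^sup>2 = 1 - 2 * \<mu> * (s - \<delta>) + \<mu> * (\<mu> * (s - \<delta>)\<^sup>2)"
    by (simp add: r_def power2_eq_square algebra_simps)
  also have "\<dots> < 1 - 2 * \<mu> * (s - \<delta>) + \<mu> * e" using key mu0 by simp
  also have "\<dots> = 1 - 2 * \<epsilon> * (\<mu> * N)" by (simp add: \<delta>_def e_def field_simps)
  finally have "r\<^sup>2 < 1 - 2 * \<epsilon> * (\<mu> * N)" .
  moreover have "norm ((-\<mu>) *\<^sub>R (s *\<^sub>R x + u)) = \<mu> * N" using mu0 by (simp add: N_def)
  ultimately show ?thesis using sq nx by (intro exI[of _ "-\<mu>"]) simp
qed

lemma interval_lem:
  fixes x w :: "'a::real_normed_vector"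
  assumes nx: "norm x = 1" and e0: "0 \<le> \<epsilon>" and e1: "\<epsilon> < 1"
    and h1: "\<bar>t1\<bar> \<le> \<epsilon> * norm (t1 *\<^sub>R x + w)"
    and h2: "\<bar>t2\<bar> \<le> \<epsilon> * norm (t2 *\<^sub>R x + w)"
    and o1: "t1 \<le> t" and o2: "t \<le> t2"
  shows "\<bar>t\<bar> \<le> \<epsilon> * norm (t *\<^sub>R x + w)"
proof (cases "t \<ge> 0")
  case True
  have "t2 *\<^sub>R x + w = (t *\<^sub>R x + w) + (t2 - t) *\<^sub>R x" by (simp add: algebra_simps)
  then have "norm (t2 *\<^sub>R x + w) \<le> norm (t *\<^sub>R x + w) + norm ((t2 - t) *\<^sub>R x)"
    by (metis norm_triangle_ineq)
  also have "norm ((t2 - t) *\<^sub>R x) = t2 - t" using nx o2 by simp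
  finally have A: "norm (t2 *\<^sub>R x + w) \<le> norm (t *\<^sub>R x + w) + (t2 - t)" .
  have "t2 \<le> \<epsilon> * norm (t2 *\<^sub>R x + w)" using h2 True o2 by simp
  also have "\<dots> \<le> \<epsilon> * (norm (t *\<^sub>R x + w) + (t2 - t))" using A e0 by (rule mult_left_mono)
  finally have "t2 \<le> \<epsilon> * norm (t *\<^sub>R x + w) + \<epsilon> * (t2 - t)" by (simp add: algebra_simps)
  moreover have "\<epsilon> * (t2 - t) \<le> t2 - t" using mult_right_mono[of \<epsilon> 1 "t2 - t"] e1 o2 by simp
  ultimately show ?thesis using True by simp
next
  case False
  have "t1 *\<^sub>R x + w = (t *\<^sub>R x + w) + (t1 - t) *\<^sub>R x" by (simp add: algebra_simps)
  then have "norm (t1 *\<^sub>R x + w) \<le> norm (t *\<^sub>R x + w) + norm ((t1 - t) *\<^sub>R x)"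
    by (metis norm_triangle_ineq)
  also have "norm ((t1 - t) *\<^sub>R x) = t - t1" using nx o1 by simp
  finally have A: "norm (t1 *\<^sub>R x + w) \<le> norm (t *\<^sub>R x + w) + (t - t1)" .
  have "- t1 \<le> \<epsilon> * norm (t1 *\<^sub>R x + w)" using h1 False o1 by simp
  also have "\<dots> \<le> \<epsilon> * (norm (t *\<^sub>R x + w) + (t - t1))" using A e0 by (rule mult_left_mono)
  finally have "- t1 \<le> \<epsilon> * norm (t *\<^sub>R x + w) + \<epsilon> * (t - t1)" by (simp add: algebra_simps)
  moreover have "\<epsilon> * (t - t1) \<le> t - t1" using mult_right_mono[of \<epsilon> 1 "t - t1"] e1 o1 by simp
  ultimately show ?thesis using False by simp
qed

lemma xmult:
  fixes x :: "'a::real_normed_vector"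
  assumes nx: "norm x = 1" and e1: "\<epsilon> < 1" and h: "\<bar>a\<bar> \<le> \<epsilon> * norm (a *\<^sub>R x)"
  shows "a = 0"
proof -
  have "\<bar>a\<bar> \<le> \<epsilon> * \<bar>a\<bar>" using h nx by simp
  then have "\<bar>a\<bar> * (1 - \<epsilon>) \<le> 0" by (simp add: algebra_simps)
  then have "\<bar>a\<bar> \<le> 0" using e1 by (simp add: mult_le_0_iff)
  then show ?thesis by simp
qed

lemma mediant:
  fixes a1 a2 b1 b2 :: real
  assumes "b1 > 0" "b2 > 0" "a1 / b1 \<le> a2 / b2"
  shows "a1 / b1 \<le> (a1 + a2) / (b1 + b2)" "(a1 + a2) / (b1 + b2) \<le> a2 / b2"
proof -
  have c: "a1 * b2 \<le> a2 * b1" using assms by (simp add: field_simps)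
  show "a1 / b1 \<le> (a1 + a2) / (b1 + b2)" using assms c by (simp add: field_simps)
  show "(a1 + a2) / (b1 + b2) \<le> a2 / b2" using assms c by (simp add: field_simps)
qed

theorem theorem2p7:
  fixes x :: "'a::banach" and \<epsilon> :: real
  assumes "dim (UNIV :: 'a set) = 2"
    and "smooth_point x"
    and "0 \<le> \<epsilon>" and "\<epsilon> < 1"
  shows "\<exists>K. normal_cone K \<and> G_set x \<epsilon> = K \<union> uminus ` K"
proof -
  note dim = assms(1) and e0 = assms(3) and e1 = assms(4)
  have nx: "norm x = 1" using assms(2) by (simp add: smooth_point_def)
  obtain f :: "'a \<Rightarrow> real" where bl: "bounded_linear f" and onf: "onorm f = 1" and fx: "f x = 1"
    and uniq: "\<And>g. bounded_linear g \<Longrightarrow> onorm g = 1 \<Longrightarrow> g x = 1 \<Longrightarrow> g = f"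
    using assms(2) unfolding smooth_point_def by metis
  interpret f: bounded_linear f by (rule bl)
  have fabs: "\<bar>f v\<bar> \<le> norm v" for v using onorm[OF bl, of v] onf by simp
  then have fle: "f v \<le> norm v" for v using abs_le_D1 by blast
  have x0: "x \<noteq> 0" using nx by auto
  obtain w where w0: "w \<noteq> 0" and fw: "f w = 0" and rep: "\<And>v. \<exists>b. v = f v *\<^sub>R x + b *\<^sub>R w"
    using basis2[OF dim x0 f.linear fx] by blast
  have repm: "\<exists>b. v = f v *\<^sub>R x + b *\<^sub>R (- w)" for v
  proof -
    obtain b where "v = f v *\<^sub>R x + b *\<^sub>R w" using rep by blast
    then show ?thesis by (intro exI[of _ "-b"]) simp
  qed
  have Pw: "\<exists>\<alpha>. norm (\<alpha> *\<^sub>R x + w) \<le> \<alpha> + \<delta>" if "\<delta> > 0" for \<delta>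
    by (rule inf_zero[OF bl fx nx fle uniq w0 fw rep that])
  have Pmw: "\<exists>\<alpha>. norm (\<alpha> *\<^sub>R x + - w) \<le> \<alpha> + \<delta>" if "\<delta> > 0" for \<delta>
    by (rule inf_zero[OF bl fx nx fle uniq _ _ repm that]) (use w0 fw in \<open>simp_all add: f.neg\<close>)
  have scP: "norm ((k * \<alpha>) *\<^sub>R x + k *\<^sub>R v) \<le> k * \<alpha> + \<delta>"
    if "norm (\<alpha> *\<^sub>R x + v) \<le> \<alpha> + \<delta> / k" "k > 0" for k \<alpha> \<delta> and v :: 'a
  proof -
    have "(k * \<alpha>) *\<^sub>R x + k *\<^sub>R v = k *\<^sub>R (\<alpha> *\<^sub>R x + v)" by (simp add: algebra_simps)
    then have "norm ((k * \<alpha>) *\<^sub>R x + k *\<^sub>R v) = k * norm (\<alpha> *\<^sub>R x + v)" using that by simp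
    also have "\<dots> \<le> k * (\<alpha> + \<delta> / k)" using that by (simp add: mult_left_mono)
    also have "\<dots> = k * \<alpha> + \<delta>" using that by (simp add: field_simps)
    finally show ?thesis .
  qed
  have Pgen: "\<exists>\<alpha>. norm (\<alpha> *\<^sub>R x + u) \<le> \<alpha> + \<delta>" if fu: "f u = 0" and dp: "\<delta> > 0" for u \<delta>
  proof -
    obtain c where c: "u = f u *\<^sub>R x + c *\<^sub>R w" using rep by blast
    then have uc: "u = c *\<^sub>R w" using fu by simp
    consider "c > 0" | "c < 0" | "c = 0" by linarith
    then show ?thesis
    proof cases
      case 1
      obtain \<alpha> where "norm (\<alpha> *\<^sub>R x + w) \<le> \<alpha> + \<delta> / c" using Pw[of "\<delta> / c"] 1 fu dp by auto
      from scP[OF this 1] show ?thesis using uc by blast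
    next
      case 2
      have "\<delta> / (- c) > 0" using 2 dp by (simp add: divide_pos_neg)
      then obtain \<alpha> where "norm (\<alpha> *\<^sub>R x + - w) \<le> \<alpha> + \<delta> / (- c)" using Pmw by blast
      from scP[OF this] 2 have "norm ((- c * \<alpha>) *\<^sub>R x + (- c) *\<^sub>R (- w)) \<le> - c * \<alpha> + \<delta>" by simp
      then show ?thesis using uc by (intro exI[of _ "- c * \<alpha>"]) simp
    next
      case 3
      then show ?thesis using uc fu dp by (intro exI[of _ 0]) simp
    qed
  qed
  have Gneg: "approx_bj_orth \<epsilon> x (- y)" if "approx_bj_orth \<epsilon> x y" for y
    unfolding approx_bj_orth_def
  proof
    fix t :: real
    have "(norm (x + (- t) *\<^sub>R y))\<^sup>2 \<ge> (norm x)\<^sup>2 - 2 * \<epsilon> * norm x * norm ((- t) *\<^sub>R y)"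
      using that unfolding approx_bj_orth_def by blast
    then show "(norm (x + t *\<^sub>R - y))\<^sup>2 \<ge> (norm x)\<^sup>2 - 2 * \<epsilon> * norm x * norm (t *\<^sub>R - y)"
      by simp
  qed
  have Gup: "f y \<le> \<epsilon> * norm y" if "approx_bj_orth \<epsilon> x y" for y
  proof (rule ccontr)
    assume "\<not> ?thesis"
    then have hs: "f y > \<epsilon> * norm (f y *\<^sub>R x + (y - f y *\<^sub>R x))" by simp
    have P: "\<exists>\<alpha>. norm (\<alpha> *\<^sub>R x - (y - f y *\<^sub>R x)) \<le> \<alpha> + \<delta>" if "\<delta> > 0" for \<delta>
    proof -
      have "f (- (y - f y *\<^sub>R x)) = 0" using fx by (simp add: f.diff f.neg f.scaleR)
      from Pgen[OF this that] show ?thesis by (simp add: algebra_simps)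
    qed
    obtain t where "(norm (x + t *\<^sub>R (f y *\<^sub>R x + (y - f y *\<^sub>R x))))\<^sup>2 <
           (norm x)\<^sup>2 - 2 * \<epsilon> * norm x * norm (t *\<^sub>R (f y *\<^sub>R x + (y - f y *\<^sub>R x)))"
      using core[OF nx e0 P hs] by blast
    then have "(norm (x + t *\<^sub>R y))\<^sup>2 < (norm x)\<^sup>2 - 2 * \<epsilon> * norm x * norm (t *\<^sub>R y)" by simp
    then show False using that unfolding approx_bj_orth_def by (meson not_le)
  qed
  define C where "C = {y. \<bar>f y\<bar> \<le> \<epsilon> * norm y}"
  have GC: "G_set x \<epsilon> = C"
  proof
    show "G_set x \<epsilon> \<subseteq> C"
    proof
      fix y assume "y \<in> G_set x \<epsilon>"
      then have h: "approx_bj_orth \<epsilon> x y" by (simp add: G_set_def)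
      have "f y \<le> \<epsilon> * norm y" by (rule Gup[OF h])
      moreover have "f (- y) \<le> \<epsilon> * norm (- y)" by (rule Gup[OF Gneg[OF h]])
      ultimately show "y \<in> C" by (simp add: C_def f.neg)
    qed
  next
    show "C \<subseteq> G_set x \<epsilon>"
    proof
      fix y assume "y \<in> C"
      then have hy: "\<bar>f y\<bar> \<le> \<epsilon> * norm y" by (simp add: C_def)
      have "(norm (x + t *\<^sub>R y))\<^sup>2 \<ge> (norm x)\<^sup>2 - 2 * \<epsilon> * norm x * norm (t *\<^sub>R y)" for t
      proof -
        define q where "q = \<epsilon> * norm (t *\<^sub>R y)"
        have q0: "q \<ge> 0" using e0 by (simp add: q_def)
        have "\<bar>t * f y\<bar> \<le> \<bar>t\<bar> * (\<epsilon> * norm y)" using hy by (simp add: abs_mult mult_left_mono)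
        then have tq: "\<bar>t * f y\<bar> \<le> q" by (simp add: q_def algebra_simps)
        have "f (x + t *\<^sub>R y) = 1 + t * f y" by (simp add: f.add f.scaleR fx)
        then have "norm (x + t *\<^sub>R y) \<ge> 1 - q" using fle[of "x + t *\<^sub>R y"] tq by linarith
        then have "(norm (x + t *\<^sub>R y))\<^sup>2 \<ge> 1 - 2 * q"
        proof (cases "1 - q \<ge> 0")
          case True
          assume a: "norm (x + t *\<^sub>R y) \<ge> 1 - q"
          have "(1 - q)\<^sup>2 \<le> (norm (x + t *\<^sub>R y))\<^sup>2" using True a by (simp add: power_mono)
          moreover have "(1 - q)\<^sup>2 \<ge> 1 - 2 * q" by (simp add: power2_eq_square algebra_simps)
          ultimately show ?thesis by linarith
        next
          case False
          then show ?thesis using q0 by (smt (verit) zero_le_power2)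
        qed
        then show ?thesis using nx by (simp add: q_def)
      qed
      then show "y \<in> G_set x \<epsilon>" by (simp add: G_set_def approx_bj_orth_def)
    qed
  qed
  have cuniq: "b = b'" if "y = f y *\<^sub>R x + b *\<^sub>R w" "y = f y *\<^sub>R x + b' *\<^sub>R w" for y b b'
  proof -
    have "b *\<^sub>R w = b' *\<^sub>R w" using that by (metis add_left_cancel)
    then show ?thesis using w0 by simp
  qed
  define K where "K = {y. \<bar>f y\<bar> \<le> \<epsilon> * norm y \<and> (\<exists>b\<ge>0. y = f y *\<^sub>R x + b *\<^sub>R w)}"
  have KC: "K \<subseteq> C" by (auto simp: K_def C_def)
  have nKC: "uminus ` K \<subseteq> C" by (auto simp: K_def C_def f.neg)
  have CK: "C \<subseteq> K \<union> uminus ` K"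
  proof
    fix y assume yC: "y \<in> C"
    obtain b where b: "y = f y *\<^sub>R x + b *\<^sub>R w" using rep by blast
    show "y \<in> K \<union> uminus ` K"
    proof (cases "b \<ge> 0")
      case True
      then show ?thesis using yC b by (auto simp: K_def C_def)
    next
      case False
      have "- y = f (- y) *\<^sub>R x + (- b) *\<^sub>R w" using b by (simp add: f.neg algebra_simps)
      then have ex: "\<exists>b'\<ge>0. - y = f (- y) *\<^sub>R x + b' *\<^sub>R w"
      proof (intro exI conjI)
        show "0 \<le> - b" using False by simp
      qed
      have cc: "\<bar>f (- y)\<bar> \<le> \<epsilon> * norm (- y)" using yC by (simp add: C_def f.neg)
      have "- y \<in> K" unfolding K_def using ex cc by blast
      then have "- (- y) \<in> uminus ` K" by blast
      then show ?thesis by simp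
    qed
  qed
  have Kadd: "y1 + y2 \<in> K" if h1: "y1 \<in> K" and h2: "y2 \<in> K" for y1 y2
  proof -
    obtain b1 where b1: "b1 \<ge> 0" "y1 = f y1 *\<^sub>R x + b1 *\<^sub>R w" and c1: "\<bar>f y1\<bar> \<le> \<epsilon> * norm y1"
      using h1 by (auto simp: K_def)
    obtain b2 where b2: "b2 \<ge> 0" "y2 = f y2 *\<^sub>R x + b2 *\<^sub>R w" and c2: "\<bar>f y2\<bar> \<le> \<epsilon> * norm y2"
      using h2 by (auto simp: K_def)
    have rep12: "y1 + y2 = f (y1 + y2) *\<^sub>R x + (b1 + b2) *\<^sub>R w"
      using b1 b2 by (simp add: f.add algebra_simps)
    show ?thesis
    proof (cases "b1 = 0 \<or> b2 = 0")
      case True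
      then show ?thesis
      proof
        assume "b1 = 0"
        then have "y1 = f y1 *\<^sub>R x" using b1 by simp
        then have "f y1 = 0" using xmult[OF nx e1, of "f y1"] c1 by simp
        then have "y1 = 0" using \<open>y1 = f y1 *\<^sub>R x\<close> by simp
        then show ?thesis using h1 h2 by simp
      next
        assume "b2 = 0"
        then have "y2 = f y2 *\<^sub>R x" using b2 by simp
        then have "f y2 = 0" using xmult[OF nx e1, of "f y2"] c2 by simp
        then have "y2 = 0" using \<open>y2 = f y2 *\<^sub>R x\<close> by simp
        then show ?thesis using h1 h2 by simp
      qed
    next
      case False
      then have p1: "b1 > 0" and p2: "b2 > 0" using b1 b2 by auto
      define a1 where "a1 = f y1"
      define a2 where "a2 = f y2"
      have fs: "f (y1 + y2) = a1 + a2" by (simp add: a1_def a2_def f.add)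
      have tr: "\<bar>a / b\<bar> \<le> \<epsilon> * norm ((a / b) *\<^sub>R x + w)"
        if "b > 0" "\<bar>a\<bar> \<le> \<epsilon> * norm (a *\<^sub>R x + b *\<^sub>R w)" for a b
      proof -
        have "a *\<^sub>R x + b *\<^sub>R w = b *\<^sub>R ((a / b) *\<^sub>R x + w)" using that(1) by (simp add: algebra_simps)
        then have "norm (a *\<^sub>R x + b *\<^sub>R w) = b * norm ((a / b) *\<^sub>R x + w)" using that(1) by simp
        then have "\<bar>a\<bar> \<le> b * (\<epsilon> * norm ((a / b) *\<^sub>R x + w))" using that(2) by (simp add: algebra_simps)
        then show ?thesis using that(1) by (simp add: abs_div pos_divide_le_eq algebra_simps)
      qed
      have trb: "\<bar>a\<bar> \<le> \<epsilon> * norm (a *\<^sub>R x + b *\<^sub>R w)"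
        if "b > 0" "\<bar>a / b\<bar> \<le> \<epsilon> * norm ((a / b) *\<^sub>R x + w)" for a b
      proof -
        have "a *\<^sub>R x + b *\<^sub>R w = b *\<^sub>R ((a / b) *\<^sub>R x + w)" using that(1) by (simp add: algebra_simps)
        then have n: "norm (a *\<^sub>R x + b *\<^sub>R w) = b * norm ((a / b) *\<^sub>R x + w)" using that(1) by simp
        have "\<bar>a\<bar> = b * \<bar>a / b\<bar>" using that(1) by (simp add: abs_div)
        also have "\<dots> \<le> b * (\<epsilon> * norm ((a / b) *\<^sub>R x + w))" using that by (intro mult_left_mono) simp_all
        finally show ?thesis using n by (simp add: algebra_simps)
      qed
      have t1: "\<bar>a1 / b1\<bar> \<le> \<epsilon> * norm ((a1 / b1) *\<^sub>R x + w)"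
        using tr[OF p1] c1 b1 by (simp add: a1_def)
      have t2: "\<bar>a2 / b2\<bar> \<le> \<epsilon> * norm ((a2 / b2) *\<^sub>R x + w)"
        using tr[OF p2] c2 b2 by (simp add: a2_def)
      have pb: "b1 + b2 > 0" using p1 p2 by simp
      have tm: "\<bar>(a1 + a2) / (b1 + b2)\<bar> \<le> \<epsilon> * norm (((a1 + a2) / (b1 + b2)) *\<^sub>R x + w)"
      proof (cases "a1 / b1 \<le> a2 / b2")
        case True
        from mediant[OF p1 p2 True] show ?thesis
          using interval_lem[OF nx e0 e1 t1 t2] by blast
      next
        case False
        then have "a2 / b2 \<le> a1 / b1" by simp
        then have "a2 / b2 \<le> (a1 + a2) / (b1 + b2) \<and> (a1 + a2) / (b1 + b2) \<le> a1 / b1"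
          using mediant[OF p2 p1] by (metis add.commute)
        then show ?thesis
          using interval_lem[OF nx e0 e1 t2 t1] by blast
      qed
      have "\<bar>a1 + a2\<bar> \<le> \<epsilon> * norm ((a1 + a2) *\<^sub>R x + (b1 + b2) *\<^sub>R w)"
        by (rule trb[OF pb tm])
      then have "\<bar>f (y1 + y2)\<bar> \<le> \<epsilon> * norm (y1 + y2)" using rep12 fs by simp
      then show ?thesis using rep12 b1 b2 unfolding K_def by (auto intro!: exI[of _ "b1 + b2"])
    qed
  qed
  have Kscale: "\<alpha> *\<^sub>R y \<in> K" if ha: "\<alpha> \<ge> 0" and hy: "y \<in> K" for \<alpha> y
  proof -
    obtain b where b: "b \<ge> 0" "y = f y *\<^sub>R x + b *\<^sub>R w" and c: "\<bar>f y\<bar> \<le> \<epsilon> * norm y"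
      using hy by (auto simp: K_def)
    have r: "\<alpha> *\<^sub>R y = f (\<alpha> *\<^sub>R y) *\<^sub>R x + (\<alpha> * b) *\<^sub>R w"
    proof -
      have "\<alpha> *\<^sub>R y = \<alpha> *\<^sub>R (f y *\<^sub>R x + b *\<^sub>R w)" using b(2) by (rule arg_cong)
      also have "\<dots> = (\<alpha> * f y) *\<^sub>R x + (\<alpha> * b) *\<^sub>R w" by (simp add: scaleR_add_right)
      also have "\<alpha> * f y = f (\<alpha> *\<^sub>R y)" by (simp add: f.scaleR)
      finally show ?thesis .
    qed
    have "\<bar>f (\<alpha> *\<^sub>R y)\<bar> = \<alpha> * \<bar>f y\<bar>" using ha by (simp add: f.scaleR abs_mult)
    also have "\<dots> \<le> \<alpha> * (\<epsilon> * norm y)" using c ha by (simp add: mult_left_mono)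
    also have "\<dots> = \<epsilon> * norm (\<alpha> *\<^sub>R y)" using ha by simp
    finally show ?thesis using r b ha unfolding K_def by (auto intro!: exI[of _ "\<alpha> * b"])
  qed
  have K0: "0 \<in> K" by (auto simp: K_def intro!: exI[of _ 0])
  have Kint: "K \<inter> uminus ` K = {0}"
  proof
    show "{0} \<subseteq> K \<inter> uminus ` K" using K0 by (auto intro: image_eqI[of 0 _ 0])
    show "K \<inter> uminus ` K \<subseteq> {0}"
    proof
      fix y assume "y \<in> K \<inter> uminus ` K"
      then obtain z where yK: "y \<in> K" and zK: "z \<in> K" and yz: "y = - z" by auto
      obtain b where b: "b \<ge> 0" "y = f y *\<^sub>R x + b *\<^sub>R w" and c: "\<bar>f y\<bar> \<le> \<epsilon> * norm y"
        using yK by (auto simp: K_def)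
      obtain b' where b': "b' \<ge> 0" "z = f z *\<^sub>R x + b' *\<^sub>R w"
        using zK by (auto simp: K_def)
      have "y = f y *\<^sub>R x + (- b') *\<^sub>R w" using b'(2) yz by (simp add: f.neg algebra_simps)
      then have "b = - b'" using cuniq b(2) by blast
      then have "b = 0" using b(1) b'(1) by simp
      then have "y = f y *\<^sub>R x" using b by simp
      then have "f y = 0" using xmult[OF nx e1, of "f y"] c by simp
      then show "y \<in> {0}" using \<open>y = f y *\<^sub>R x\<close> by simp
    qed
  qed
  have "normal_cone K" unfolding normal_cone_def using Kadd Kscale Kint by blast
  moreover have "G_set x \<epsilon> = K \<union> uminus ` K" using GC KC nKC CK by blast
  ultimately show ?thesis by blast
qed

end
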